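(* Let $\mathbb{K}\in\{\mathbb{R},\mathbb{C},\mathbb{H}\}$, $\delta=\dim_\mathbb{R}\mathbb{K}$, $m\ge2$, $\alpha=\frac{\delta(m-1)-2}{2}$, $\beta=\frac{\delta-2}{2}$. Then \[ j_{\alpha+1,1}^{\delta(m-1)}<\frac{\Gamma(\alpha+2)\Gamma(\beta+1)}{\Gamma(\alpha+\beta+2)}\,\lambda_{\mathbb{K}}(m) \] for all $m\ge2$, except in the case $m=2$, $\delta=1$, in which the two sides are equal.
   Context: $\delta=1,2,4$ for $\mathbb{R},\mathbb{C},\mathbb{H}$ (quaternions). $j_{\nu,1}$ denotes the smallest positive zero of the Bessel function $J_\nu$. $\lambda_{\mathbb{K}}(m)=2^{m-1}(m-1)!$ for $\mathbb{K}=\mathbb{R}$, $2^{4(m-1)}((m-1)!)^2$ for $\mathbb{K}=\mathbb{C}$, $2^{8(m-1)}(2m-1)!(2m-2)!$ for $\mathbb{K}=\mathbb{H}$; equivalently $\lambda_{\mathbb{K}}(m)=\frac{\Gamma(\alpha+\beta+2)\Gamma(\alpha+2)}{\Gamma(\beta+1)}2^{2\delta(m-1)}$. *)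

theory Defs
  imports "HOL-Analysis.Analysis"
begin

text \<open>Bessel function of the first kind, via its power series
  J_nu(x) = sum_k (-1)^k / (k! Gamma(k+nu+1)) (x/2)^(2k+nu), for x > 0.
  We use rGamma = 1/Gamma (entire), as is standard.\<close>
definition bessel_J :: "real \<Rightarrow> real \<Rightarrow> real" where
  "bessel_J nu x = (\<Sum>k. (-1) ^ k / fact k * rGamma (real k + nu + 1) * (x / 2) powr (2 * real k + nu))"

definition bessel_first_zero :: "real \<Rightarrow> real" where
  "bessel_first_zero nu = Inf {x. 0 < x \<and> bessel_J nu x = 0}"

text \<open>lambda_K(m), with K determined by delta = dim_R K in {1,2,4}.\<close>
definition lambdaK :: "nat \<Rightarrow> nat \<Rightarrow> real" where
  "lambdaK \<delta> m =
     (if \<delta> = 1 then 2 ^ (m - 1) * fact (m - 1)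
      else if \<delta> = 2 then 2 ^ (4 * (m - 1)) * (fact (m - 1))\<^sup>2
      else 2 ^ (8 * (m - 1)) * fact (2 * m - 1) * fact (2 * m - 2))"

end

theory Submission
  imports Defs
begin

definition cc :: "real \<Rightarrow> nat \<Rightarrow> real" where
  "cc \<nu> k = (-1)^k / fact k * rGamma (real k + \<nu> + 1) / 4^k"

definition GG :: "real \<Rightarrow> real \<Rightarrow> real" where
  "GG \<nu> y = (\<Sum>k. cc \<nu> k * y^k)"

lemma cc_Suc:
  assumes "\<nu> \<ge> 0"
  shows "cc \<nu> (Suc k) = - cc \<nu> k / (4 * (real k + 1) * (real k + \<nu> + 1))"
proof -
  have "rGamma (real (Suc k) + \<nu> + 1) = rGamma (real k + \<nu> + 1) / (real k + \<nu> + 1)"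
    using rGamma_plus1[of "real k + \<nu> + 1"] assms
    by (simp add: field_simps add_ac)
  then show ?thesis unfolding cc_def by (simp add: field_simps)
qed

lemma half_aux: "(p::real) > 0 \<Longrightarrow> a \<le> 2*(p::real) \<Longrightarrow> a/(4*p) \<le> 1/2"
  by (simp add: pos_divide_le_eq)

lemma cc_summable:
  assumes "\<nu> \<ge> 0"
  shows "summable (\<lambda>k. cc \<nu> k * y^k)"
proof (rule summable_ratio_test[of "1/2" "nat \<lceil>\<bar>y\<bar>\<rceil>"])
  fix k assume k: "k \<ge> nat \<lceil>\<bar>y\<bar>\<rceil>"
  have hy: "\<bar>y\<bar> \<le> real k" using k by linarith
  have pos: "4 * (real k + 1) * (real k + \<nu> + 1) > 0" using assms by (simp add: add_pos_nonneg)
  have "norm (cc \<nu> (Suc k) * y ^ Suc k) = \<bar>cc \<nu> k\<bar> * \<bar>y\<bar>^k * (\<bar>y\<bar> / (4 * (real k + 1) * (real k + \<nu> + 1)))"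
    using pos assms by (simp add: cc_Suc[OF assms] abs_mult power_abs abs_divide)
  also have "\<dots> \<le> \<bar>cc \<nu> k\<bar> * \<bar>y\<bar>^k * (1/2)"
  proof (rule mult_left_mono)
    define p where "p = (real k + 1) * (real k + \<nu> + 1)"
    have p0: "p > 0" unfolding p_def using assms by simp
    have "(real k+1)*1 \<le> p" unfolding p_def by (rule mult_left_mono) (use assms in auto)
    then have "real k + 1 \<le> p" by simp
    then have "\<bar>y\<bar> \<le> 2 * p" using hy p0 by linarith
    then have "\<bar>y\<bar> / (4 * p) \<le> 1/2" using p0 by (intro half_aux)
    then show "\<bar>y\<bar> / (4 * (real k + 1) * (real k + \<nu> + 1)) \<le> 1/2"
    proof -
      have eq: "4 * (real k + 1) * (real k + \<nu> + 1) = 4 * p" unfolding p_def by (simp only: mult.assoc)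
      show ?thesis unfolding eq by fact
    qed
  qed simp
  finally show "norm (cc \<nu> (Suc k) * y ^ Suc k) \<le> 1/2 * norm (cc \<nu> k * y ^ k)"
    by (simp add: abs_mult power_abs)
qed simp

definition GD :: "real \<Rightarrow> real \<Rightarrow> real" where
  "GD \<nu> y = (\<Sum>k. diffs (cc \<nu>) k * y^k)"

definition GDD :: "real \<Rightarrow> real \<Rightarrow> real" where
  "GDD \<nu> y = (\<Sum>k. diffs (diffs (cc \<nu>)) k * y^k)"

lemma cd_summable: "\<nu> \<ge> 0 \<Longrightarrow> summable (\<lambda>k. diffs (cc \<nu>) k * y^k)"
  by (rule termdiff_converges_all) (rule cc_summable)

lemma cdd_summable: "\<nu> \<ge> 0 \<Longrightarrow> summable (\<lambda>k. diffs (diffs (cc \<nu>)) k * y^k)"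
  by (rule termdiff_converges_all) (rule cd_summable)

lemma GG_deriv: "\<nu> \<ge> 0 \<Longrightarrow> (GG \<nu> has_field_derivative GD \<nu> y) (at y)"
  unfolding GG_def[abs_def] GD_def
  by (rule termdiffs_strong_converges_everywhere) (rule cc_summable)

lemma GD_deriv: "\<nu> \<ge> 0 \<Longrightarrow> (GD \<nu> has_field_derivative GDD \<nu> y) (at y)"
  unfolding GD_def[abs_def] GDD_def
  by (rule termdiffs_strong_converges_everywhere) (rule cd_summable)

lemma GG_0: "GG \<nu> 0 = rGamma (\<nu> + 1)"
proof -
  have "GG \<nu> 0 = cc \<nu> 0" unfolding GG_def by (rule powser_zero)
  then show ?thesis by (simp add: cc_def)
qed

lemma GG_ode:
  assumes "\<nu> \<ge> 0"
  shows "4 * y * GDD \<nu> y + 4 * (\<nu> + 1) * GD \<nu> y + GG \<nu> y = 0"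
proof -
  define c where "c = cc \<nu>"
  have s1: "(\<lambda>k. 4 * y * (diffs (diffs c) k * y^k)) sums (4 * y * GDD \<nu> y)"
    unfolding GDD_def c_def by (intro sums_mult summable_sums cdd_summable assms)
  have s2: "(\<lambda>k. 4 * (\<nu> + 1) * (diffs c (Suc k) * y^Suc k)) sums (4 * (\<nu> + 1) * (GD \<nu> y - diffs c 0))"
  proof -
    have "(\<lambda>k. diffs c k * y^k) sums GD \<nu> y"
      unfolding GD_def c_def by (intro summable_sums cd_summable assms)
    then have "(\<lambda>k. diffs c (Suc k) * y^Suc k) sums (GD \<nu> y - diffs c 0)"
      by (subst sums_Suc_iff) simp
    then show ?thesis by (rule sums_mult)
  qed
  have s3: "(\<lambda>k. c (Suc k) * y^Suc k) sums (GG \<nu> y - c 0)"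
  proof -
    have "(\<lambda>k. c k * y^k) sums GG \<nu> y"
      unfolding GG_def c_def by (intro summable_sums cc_summable assms)
    then show ?thesis by (subst sums_Suc_iff) simp
  qed
  have s: "(\<lambda>k. 4 * y * (diffs (diffs c) k * y^k) + 4 * (\<nu> + 1) * (diffs c (Suc k) * y^Suc k)
      + c (Suc k) * y^Suc k) sums (4 * y * GDD \<nu> y + 4 * (\<nu> + 1) * (GD \<nu> y - diffs c 0) + (GG \<nu> y - c 0))"
    by (intro sums_add s1 s2 s3)
  have z: "4 * y * (diffs (diffs c) k * y^k) + 4 * (\<nu> + 1) * (diffs c (Suc k) * y^Suc k)
      + c (Suc k) * y^Suc k = 0" for k
  proof -
    have "c (Suc (Suc k)) = - c (Suc k) / (4 * (real (Suc k) + 1) * (real (Suc k) + \<nu> + 1))"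
      unfolding c_def by (rule cc_Suc[OF assms])
    moreover have "4 * (real (Suc k) + 1) * (real (Suc k) + \<nu> + 1) \<noteq> 0"
      using assms by simp
    ultimately have e: "c (Suc k) = - (4 * (real k + 2) * (real k + \<nu> + 2)) * c (Suc (Suc k))"
      by (simp add: field_simps)
    have "4 * (diffs (diffs c) k) + 4 * (\<nu> + 1) * diffs c (Suc k) + c (Suc k) = 0"
      unfolding e by (simp add: diffs_def algebra_simps)
    then have "y^Suc k * (4 * (diffs (diffs c) k) + 4 * (\<nu> + 1) * diffs c (Suc k) + c (Suc k)) = 0"
      by simp
    then show ?thesis by (simp add: algebra_simps)
  qed
  have c0: "4 * (\<nu> + 1) * diffs c 0 + c 0 = 0"
  proof -
    have "c (Suc 0) = - c 0 / (4 * (real 0 + 1) * (real 0 + \<nu> + 1))"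
      unfolding c_def by (rule cc_Suc[OF assms])
    moreover have "\<nu> + 1 \<noteq> 0" using assms by simp
    ultimately show ?thesis by (simp add: diffs_def field_simps)
  qed
  from s have "(\<lambda>k. 0::real) sums (4 * y * GDD \<nu> y + 4 * (\<nu> + 1) * (GD \<nu> y - diffs c 0) + (GG \<nu> y - c 0))"
    by (simp only: z)
  then have "4 * y * GDD \<nu> y + 4 * (\<nu> + 1) * (GD \<nu> y - diffs c 0) + (GG \<nu> y - c 0) = 0"
    using sums_zero sums_unique2 by blast
  then show ?thesis using c0 by (simp add: algebra_simps)
qed

lemma bessel_GG:
  assumes "\<nu> \<ge> 0" "x > 0"
  shows "bessel_J \<nu> x = (x/2) powr \<nu> * GG \<nu> (x^2)"
proof -
  have t: "(-1)^k / fact k * rGamma (real k + \<nu> + 1) * (x / 2) powr (2 * real k + \<nu>)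
        = (x/2) powr \<nu> * (cc \<nu> k * (x^2)^k)" for k
  proof -
    have "(x / 2) powr (2 * real k + \<nu>) = (x/2) powr (real (2*k)) * (x/2) powr \<nu>"
      by (simp add: powr_add)
    also have "(x/2) powr (real (2*k)) = (x/2)^(2*k)"
      using assms by (subst powr_realpow) auto
    also have "(x/2)^(2*k) = (x^2)^k / 4^k"
      by (simp add: power_mult power_divide)
    finally show ?thesis unfolding cc_def by simp
  qed
  have "bessel_J \<nu> x = (\<Sum>k. (x/2) powr \<nu> * (cc \<nu> k * (x^2)^k))"
    unfolding bessel_J_def t ..
  also have "\<dots> = (x/2) powr \<nu> * GG \<nu> (x^2)"
    unfolding GG_def by (rule suminf_mult) (rule cc_summable[OF assms(1)])
  finally show ?thesis .
qed

lemma g_deriv: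
  assumes "\<nu> \<ge> 0"
  shows "((\<lambda>x. GG \<nu> (x^2)) has_real_derivative (2 * x * GD \<nu> (x^2))) (at x)"
proof -
  have "((\<lambda>x. GG \<nu> (x^2)) has_real_derivative (GD \<nu> (x^2) * (2 * x))) (at x)"
    by (rule DERIV_chain2[OF GG_deriv[OF assms]]) (auto intro!: derivative_eq_intros)
  then show ?thesis by (simp add: mult_ac)
qed

lemma P_deriv:
  fixes n :: nat
  shows "((\<lambda>x. x^(n+1) * (2 * x * GD (real n / 2) (x^2))) has_real_derivative
          (- (x^(n+1) * GG (real n / 2) (x^2)))) (at x)"
proof -
  define \<nu> where "\<nu> = real n / 2"
  have nu: "\<nu> \<ge> 0" unfolding \<nu>_def by simp
  have d1: "((\<lambda>x. GD \<nu> (x^2)) has_real_derivative (GDD \<nu> (x^2) * (2 * x))) (at x)"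
    by (rule DERIV_chain2[OF GD_deriv[OF nu]]) (auto intro!: derivative_eq_intros)
  have eq: "(\<lambda>x. x^(n+1) * (2 * x * GD \<nu> (x^2))) = (\<lambda>x. 2 * x^(n+2) * GD \<nu> (x^2))"
    by (auto simp: fun_eq_iff power_Suc mult_ac)
  have d2: "((\<lambda>x. 2 * x^(n+2) * GD \<nu> (x^2)) has_real_derivative
     (2 * (real (n+2) * x^(n+1)) * GD \<nu> (x^2) + 2 * x^(n+2) * (GDD \<nu> (x^2) * (2 * x)))) (at x)"
  proof -
    have "((\<lambda>x. x^(n+2)) has_real_derivative (real (n+2) * x^(n+2 - Suc 0))) (at x)"
      by (rule DERIV_pow)
    then have "((\<lambda>x. x^(n+2)) has_real_derivative (real (n+2) * x^(n+1))) (at x)"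
      by simp
    then have "((\<lambda>x. 2 * x^(n+2)) has_real_derivative (2 * (real (n+2) * x^(n+1)))) (at x)"
      by (rule DERIV_cmult)
    from DERIV_mult[OF this d1] show ?thesis by (simp add: mult_ac)
  qed
  have ode: "4 * x^2 * GDD \<nu> (x^2) + 4 * (\<nu> + 1) * GD \<nu> (x^2) + GG \<nu> (x^2) = 0"
    by (rule GG_ode[OF nu])
  have "2 * (real (n+2) * x^(n+1)) * GD \<nu> (x^2) + 2 * x^(n+2) * (GDD \<nu> (x^2) * (2 * x))
      = x^(n+1) * (4 * x^2 * GDD \<nu> (x^2) + 4 * (\<nu> + 1) * GD \<nu> (x^2))"
    unfolding \<nu>_def by (simp add: algebra_simps power_Suc power2_eq_square)
  also have "4 * x^2 * GDD \<nu> (x^2) + 4 * (\<nu> + 1) * GD \<nu> (x^2) = - GG \<nu> (x^2)"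
    using ode by linarith
  also have "x^(n+1) * (- GG \<nu> (x^2)) = - (x^(n+1) * GG \<nu> (x^2))" by simp
  finally show ?thesis using d2 unfolding eq \<nu>_def[symmetric] by simp
qed

lemma picone_alg:
  fixes w a gv gdv :: real
  assumes "gv \<noteq> 0"
  shows "w * (1 - a^2) - (a^2 * (((- (w * gv)) * gv - w * gdv * gdv) / (gv * gv)) + (2 * a * (-1)) * (w * gdv / gv))
     = w * (1 + a * gdv / gv)^2"
  using assms by (simp add: field_simps power2_eq_square)

lemma dpow_div: "((\<lambda>x. x^(k+1) / real (k+1)) has_real_derivative (x^k::real)) (at x)"
proof -
  have "((\<lambda>x. x^(k+1)) has_real_derivative (real (k+1) * x^(k+1 - Suc 0))) (at x)"
    by (rule DERIV_pow)
  then have "((\<lambda>x. x^(k+1) / real (k+1)) has_real_derivative (real (k+1) * x^k / real (k+1))) (at x)"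
    by (intro DERIV_cdivide) simp
  then show ?thesis by simp
qed

lemma k_aux:
  fixes p q r :: real
  assumes "p > 0" "q = p + 1" "r = p + 2"
  shows "1/p - 2/q + 1/r = 2/(p*q*r)"
proof -
  have q: "q > 0" and r: "r > 0" using assms by simp_all
  have "1/p - 2/q + 1/r = (q*r - 2*p*r + p*q)/(p*q*r)"
    using assms(1) q r by (simp add: field_simps)
  also have "q*r - 2*p*r + p*q = 2" unfolding assms(2,3) by (simp add: algebra_simps)
  finally show ?thesis .
qed

lemma H_alg:
  fixes a X Y :: real
  assumes "a \<ge> 0"
  shows "Y/(a+2) - (X^2*(Y/(a+2)) - 2*X*((X*Y)/(a+3)) + (X^2*Y)/(a+4))
       = Y/(a+2) - 2*(X^2*Y)/((a+2)*(a+3)*(a+4))"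
proof -
  have h: "a+2 > 0" "a+3 > 0" "a+4 > 0" using assms by linarith+
  have k: "1/(a+2) - 2/(a+3) + 1/(a+4) = 2/((a+2)*(a+3)*(a+4))"
    by (rule k_aux) (use h in simp_all)
  have "Y/(a+2) - (X^2*(Y/(a+2)) - 2*X*((X*Y)/(a+3)) + (X^2*Y)/(a+4))
      = Y/(a+2) - (X^2*Y) * (1/(a+2) - 2/(a+3) + 1/(a+4))"
    by (simp add: algebra_simps power2_eq_square)
  also have "\<dots> = Y/(a+2) - 2*(X^2*Y)/((a+2)*(a+3)*(a+4))" unfolding k by simp
  finally show ?thesis .
qed

lemma picone:
  fixes n :: nat and X :: real
  assumes X: "X > 0" and pos: "\<And>x. 0 \<le> x \<Longrightarrow> x \<le> X \<Longrightarrow> GG (real n / 2) (x^2) > 0"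
  shows "X^(n+2)/(real n+2) - 2*X^(n+4)/((real n+2)*(real n+3)*(real n+4)) \<ge> 0"
proof -
  define \<nu> where "\<nu> = real n / 2"
  have nu: "\<nu> \<ge> 0" unfolding \<nu>_def by simp
  define g where "g x = GG \<nu> (x^2)" for x
  define gd where "gd x = 2 * x * GD \<nu> (x^2)" for x
  define P where "P x = x^(n+1) * gd x" for x
  define H where "H x = x^(n+2)/(real n+2) - (X^2*(x^(n+2)/(real n+2)) - 2*X*(x^(n+3)/(real n+3)) + x^(n+4)/(real n+4))" for x
  define Psi where "Psi x = H x - (X - x)^2 * (P x / g x)" for x
  have dg: "(g has_real_derivative gd x) (at x)" for x
    unfolding g_def[abs_def] gd_def by (rule g_deriv[OF nu])
  have dP: "(P has_real_derivative (- (x^(n+1) * g x))) (at x)" for x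
    unfolding P_def[abs_def] gd_def g_def \<nu>_def by (rule P_deriv)
  have dH: "(H has_real_derivative (x^(n+1) * (1 - (X - x)^2))) (at x)" for x
  proof -
    have a: "((\<lambda>x. x^(n+2)/(real n+2)) has_real_derivative x^(n+1)) (at x)"
    proof -
      have e1: "n+1+1 = n+2" by simp
      have e2: "real (n+2) = real n + 2" by simp
      show ?thesis using dpow_div[of "n+1" x] unfolding e1 e2 .
    qed
    have b: "((\<lambda>x. x^(n+3)/(real n+3)) has_real_derivative x^(n+2)) (at x)"
    proof -
      have e1: "n+2+1 = n+3" by simp
      have e2: "real (n+3) = real n + 3" by simp
      show ?thesis using dpow_div[of "n+2" x] unfolding e1 e2 .
    qed
    have c: "((\<lambda>x. x^(n+4)/(real n+4)) has_real_derivative x^(n+3)) (at x)"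
    proof -
      have e1: "n+3+1 = n+4" by simp
      have e2: "real (n+4) = real n + 4" by simp
      show ?thesis using dpow_div[of "n+3" x] unfolding e1 e2 .
    qed
    have "(H has_real_derivative (x^(n+1) - (X^2 * x^(n+1) - 2*X*x^(n+2) + x^(n+3)))) (at x)"
      unfolding H_def[abs_def] by (intro DERIV_diff DERIV_add DERIV_cmult a b c)
    moreover have "x^(n+1) - (X^2 * x^(n+1) - 2*X*x^(n+2) + x^(n+3)) = x^(n+1) * (1 - (X - x)^2)"
      by (simp add: power_add power2_eq_square power3_eq_cube algebra_simps)
    ultimately show ?thesis by simp
  qed
  have dsq: "((\<lambda>x. (X - x)^2) has_real_derivative (2 * (X - x) * (-1))) (at x)" for x
    by (auto intro!: derivative_eq_intros)
  have dPsi: "(Psi has_real_derivative (x^(n+1) * (1 + (X - x) * gd x / g x)^2)) (at x)"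
    if x: "0 \<le> x" "x \<le> X" for x
  proof -
    have gx: "g x \<noteq> 0" using pos[OF x] unfolding g_def \<nu>_def by simp
    have "(Psi has_real_derivative
       (x^(n+1) * (1 - (X - x)^2) - ((X - x)^2 * (((- (x^(n+1) * g x)) * g x - P x * gd x) / (g x * g x))
          + (2 * (X - x) * (-1)) * (P x / g x)))) (at x)"
      unfolding Psi_def[abs_def]
      by (intro DERIV_diff dH DERIV_mult' dsq DERIV_divide dP dg gx)
    moreover have "x^(n+1) * (1 - (X - x)^2) - ((X - x)^2 * (((- (x^(n+1) * g x)) * g x - P x * gd x) / (g x * g x))
          + (2 * (X - x) * (-1)) * (P x / g x))
        = x^(n+1) * (1 + (X - x) * gd x / g x)^2"
      unfolding P_def by (rule picone_alg[OF gx])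
    ultimately show ?thesis by simp
  qed
  have "Psi 0 \<le> Psi X"
  proof (rule DERIV_nonneg_imp_increasing_open[of 0 X])
    show "0 \<le> X" using X by simp
    fix x assume "0 < x" "x < X"
    then show "\<exists>y. (Psi has_real_derivative y) (at x) \<and> 0 \<le> y"
      using dPsi[of x] by (intro exI[of _ "x^(n+1) * (1 + (X - x) * gd x / g x)^2"]) auto
  next
    show "continuous_on {0..X} Psi"
      by (rule continuous_at_imp_continuous_on) (metis DERIV_isCont atLeastAtMost_iff dPsi)
  qed
  moreover have "Psi 0 = 0" unfolding Psi_def H_def P_def by (simp add: power_0_left)
  moreover have "Psi X = H X" unfolding Psi_def by simp
  moreover have "H X = X^(n+2)/(real n+2) - 2*X^(n+4)/((real n+2)*(real n+3)*(real n+4))"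
  proof -
    have p3: "X^(n+3) = X * X^(n+2)" and p4: "X^(n+4) = X^2 * X^(n+2)"
      by (simp_all add: power_add power2_eq_square power3_eq_cube numeral_eq_Suc)
    show ?thesis unfolding H_def p3 p4 by (rule H_alg) simp
  qed
  ultimately show ?thesis by simp
qed

lemma GG0_pos: "\<nu> \<ge> 0 \<Longrightarrow> GG \<nu> 0 > 0"
  unfolding GG_0 rGamma_inverse_Gamma by simp

lemma H_neg:
  fixes a X Y :: real
  assumes "a \<ge> 0" "Y > 0" "X^2 > (a+3)*(a+4)/2"
  shows "Y/(a+2) - 2*(X^2*Y)/((a+2)*(a+3)*(a+4)) < 0"
proof -
  have h: "a+2 > 0" "a+3 > 0" "a+4 > 0" using assms by linarith+
  have d: "(a+2)*(a+3)*(a+4) > 0" using h by simp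
  have "Y/(a+2) = (Y*((a+3)*(a+4)))/((a+2)*(a+3)*(a+4))"
  proof -
    define q where "q = (a+3)*(a+4)"
    have q: "q \<noteq> 0" unfolding q_def using h by simp
    have e: "(a+2)*(a+3)*(a+4) = (a+2)*q" unfolding q_def by (simp add: mult.assoc)
    have "Y/(a+2) = (Y*q)/((a+2)*q)" using q by simp
    then show ?thesis unfolding q_def[symmetric] e .
  qed
  also have "\<dots> < 2*(X^2*Y)/((a+2)*(a+3)*(a+4))"
  proof (rule divide_strict_right_mono[OF _ d])
    have "(a+3)*(a+4) < 2*X^2" using assms(3) by simp
    then have "Y*((a+3)*(a+4)) < Y*(2*X^2)" using assms(2) by simp
    then show "Y*((a+3)*(a+4)) < 2*(X^2*Y)" by (simp add: mult_ac)
  qed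
  finally show ?thesis by simp
qed

lemma exists_zero:
  fixes n :: nat and X :: real
  assumes X: "X > 0" and XX: "X^2 > (real n+3)*(real n+4)/2"
  shows "\<exists>z. 0 < z \<and> z \<le> X \<and> bessel_J (real n/2) z = 0"
proof -
  define \<nu> where "\<nu> = real n / 2"
  have nu: "\<nu> \<ge> 0" unfolding \<nu>_def by simp
  define g where "g x = GG \<nu> (x^2)" for x
  have cont: "continuous_on A g" for A
    unfolding g_def
    by (rule continuous_at_imp_continuous_on) (metis DERIV_isCont g_deriv[OF nu])
  have g0: "g 0 > 0" unfolding g_def using GG0_pos[OF nu] by simp
  have "\<not> (\<forall>x. 0 \<le> x \<and> x \<le> X \<longrightarrow> g x > 0)"
  proof
    assume "\<forall>x. 0 \<le> x \<and> x \<le> X \<longrightarrow> g x > 0"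
    then have "X^(n+2)/(real n+2) - 2*X^(n+4)/((real n+2)*(real n+3)*(real n+4)) \<ge> 0"
      by (intro picone X) (auto simp: g_def \<nu>_def)
    moreover have "X^(n+2)/(real n+2) - 2*X^(n+4)/((real n+2)*(real n+3)*(real n+4)) < 0"
    proof -
      have p4: "X^(n+4) = X^2 * X^(n+2)"
        by (simp add: power_add power2_eq_square numeral_eq_Suc)
      show ?thesis unfolding p4 by (rule H_neg) (use X XX in simp_all)
    qed
    ultimately show False by simp
  qed
  then obtain x where x: "0 \<le> x" "x \<le> X" "g x \<le> 0" by (auto simp: not_less)
  obtain z where z: "0 \<le> z" "z \<le> x" "g z = 0"
    using IVT2'[of g x 0 0] x g0 cont by auto
  have "z \<noteq> 0" using z g0 by auto
  then have zpos: "z > 0" using z by simp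
  have "bessel_J \<nu> z = (z/2) powr \<nu> * g z" unfolding g_def by (rule bessel_GG[OF nu zpos])
  then have "bessel_J \<nu> z = 0" using z by simp
  then show ?thesis using zpos z x unfolding \<nu>_def by auto
qed

lemma first_zero_le:
  fixes n :: nat and X :: real
  assumes X: "X > 0" and XX: "X^2 > (real n+3)*(real n+4)/2"
  shows "0 \<le> bessel_first_zero (real n/2) \<and> bessel_first_zero (real n/2) \<le> X"
proof -
  obtain z where z: "0 < z" "z \<le> X" "bessel_J (real n/2) z = 0"
    using exists_zero[OF X XX] by blast
  let ?S = "{x. 0 < x \<and> bessel_J (real n/2) x = 0}"
  have zS: "z \<in> ?S" using z by simp
  have bdd: "bdd_below ?S" by (rule bdd_belowI[of _ 0]) simp
  have "Inf ?S \<le> z" by (rule cInf_lower[OF zS bdd])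
  moreover have "0 \<le> Inf ?S" by (rule cInf_greatest) (use zS in auto)
  ultimately show ?thesis unfolding bessel_first_zero_def using z by simp
qed


lemma pow_exp_bound:
  fixes m :: real
  assumes "m > 0"
  shows "(m+1)^N \<le> exp (real N / m) * m^N"
proof -
  have "(m+1)/m = 1 + 1/m" using assms by (simp add: field_simps)
  also have "\<dots> \<le> exp (1/m)" by (rule exp_ge_add_one_self)
  finally have "((m+1)/m)^N \<le> exp (1/m)^N"
    by (rule power_mono) (use assms in simp)
  also have "exp (1/m)^N = exp (real N / m)"
    by (simp add: exp_of_nat_mult[symmetric])
  finally have "(m+1)^N / m^N \<le> exp (real N / m)" by (simp add: power_divide)
  then show ?thesis using assms by (simp add: divide_le_eq)
qed

lemma e2_bound: "exp (2::real) < 7.3984"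
proof -
  have "exp (2::real) = exp 1 ^ 2" by (simp add: exp_of_nat_mult[symmetric])
  also have "\<dots> < (272/100)^2" by (rule power_strict_mono) (use e_less_272 in auto)
  also have "(272/100::real)^2 = 7.3984" by (simp add: power_divide)
  finally show ?thesis .
qed

lemma B_ineq:
  fixes m :: real
  assumes "m \<ge> 11/2"
  shows "exp 2 * m^4 \<le> 8 * ((m-1)*(m+1))^2"
proof -
  define s where "s = m^2"
  have s: "s \<ge> 121/4"
  proof -
    have "(11/2)^2 \<le> m^2" by (rule power_mono) (use assms in auto)
    then show ?thesis unfolding s_def by (simp add: power_divide)
  qed
  have "exp 2 * m^4 \<le> 7.3984 * s^2"
  proof -
    have "m^4 = s^2" unfolding s_def by (simp add: power_mult[symmetric])
    moreover have "exp 2 * s^2 \<le> 7.3984 * s^2"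
      by (rule mult_right_mono) (use e2_bound in auto)
    ultimately show ?thesis by simp
  qed
  also have "\<dots> \<le> 8 * (s - 1)^2"
  proof -
    have "0 \<le> s * (0.6016 * s - 16)" using s by (intro mult_nonneg_nonneg) auto
    then show ?thesis by (simp add: power2_eq_square algebra_simps)
  qed
  also have "(s - 1) = (m-1)*(m+1)" unfolding s_def by (simp add: algebra_simps power2_eq_square)
  finally show ?thesis .
qed

lemma even_T:
  fixes k :: nat
  assumes "k \<ge> 4"
  shows "2^k * (real k + 2)^(2*k) < 16^k * (fact k)^2"
  using assms
proof (induction k rule: nat_induct_at_least)
  case base
  then show ?case by (simp add: fact_numeral)
next
  case (Suc k)
  define m where "m = real k + 2"
  have m: "m \<ge> 6" unfolding m_def using Suc.hyps by simp
  have IH: "2^k * m^(2*k) < 16^k * (fact k)^2" using Suc.IH unfolding m_def .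
  have A: "(m+1)^(2*k+4) \<le> exp 2 * m^(2*k+4)"
  proof -
    have "(m+1)^(2*k+4) \<le> exp (real (2*k+4) / m) * m^(2*k+4)"
      by (rule pow_exp_bound) (use m in simp)
    also have "real (2*k+4) / m = 2" unfolding m_def by (simp add: field_simps)
    finally show ?thesis .
  qed
  have B: "exp 2 * m^4 \<le> 8 * ((m-1)*(m+1))^2" by (rule B_ineq) (use m in simp)
  have eq0: "2*k+2+2 = 2*k+4" by simp
  have "(2^(k+1) * (m+1)^(2*k+2)) * (m+1)^2 = 2^(k+1) * (m+1)^(2*k+4)"
    by (simp only: mult.assoc power_add[symmetric] eq0)
  also have "\<dots> \<le> 2^(k+1) * (exp 2 * m^(2*k+4))"
    by (rule mult_left_mono[OF A]) simp
  also have "\<dots> = (2 * exp 2 * m^4) * (2^k * m^(2*k))"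
    by (simp add: power_add mult_ac)
  also have "\<dots> < (2 * exp 2 * m^4) * (16^k * (fact k)^2)"
    by (rule mult_strict_left_mono[OF IH]) (use m in simp)
  also have "\<dots> \<le> (16 * ((m-1)*(m+1))^2) * (16^k * (fact k)^2)"
    by (rule mult_right_mono) (use B in auto)
  also have "\<dots> = (16^(Suc k) * (fact (Suc k))^2) * (m+1)^2"
    unfolding m_def by (simp add: algebra_simps power2_eq_square)
  finally have "(2^(k+1) * (m+1)^(2*k+2)) * (m+1)^2 < (16^(Suc k) * (fact (Suc k))^2) * (m+1)^2" .
  then have "2^(k+1) * (m+1)^(2*k+2) < 16^(Suc k) * (fact (Suc k))^2"
    by (rule mult_right_less_imp_less) simp
  moreover have "m + 1 = real (Suc k) + 2" unfolding m_def by simp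
  ultimately show ?case by simp
qed

lemma pi_sq_gt_9: "pi^2 > (9::real)"
proof -
  have "(3::real)^2 < pi^2" by (rule power_strict_mono) (use pi_gt3 in auto)
  then show ?thesis by simp
qed

lemma P_Suc: "fact (2*(Suc k)+1) / fact (Suc k) = (2 * (2 * real k + 3)) * (fact (2*k+1) / fact k :: real)"
proof -
  have "fact (2*(Suc k)+1) = (real (2*k+3) * real (2*k+2)) * (fact (2*k+1) :: real)"
  proof -
    have "2*(Suc k)+1 = Suc (Suc (2*k+1))" by simp
    then show ?thesis by (simp only: fact_Suc) (simp add: algebra_simps)
  qed
  also have "\<dots> = real (Suc k) * ((2 * (2 * real k + 3)) * fact (2*k+1))"
    by (simp add: algebra_simps)
  finally have a: "fact (2*(Suc k)+1) = real (Suc k) * ((2 * (2 * real k + 3)) * (fact (2*k+1)::real))" .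
  have b: "fact (Suc k) = real (Suc k) * (fact k :: real)" by simp
  show ?thesis unfolding a b by (simp del: of_nat_Suc)
qed

lemma odd_T:
  fixes k :: nat
  assumes "k \<ge> 3"
  shows "2^(2*k+1) * (real k + 5/2)^(4*k+2) < pi^2 * (fact (2*k+1) / fact k)^4"
  using assms
proof (induction k rule: nat_induct_at_least)
  case base
  have "2^(2*3+1) * (real 3 + 5/2)^(4*3+2) < 9 * (fact (2*3+1) / fact 3 :: real)^4"
    by (simp add: fact_numeral power_divide)
  also have "\<dots> \<le> pi^2 * (fact (2*3+1) / fact 3)^4"
    by (rule mult_right_mono) (use pi_sq_gt_9 in auto)
  finally show ?case .
next
  case (Suc k)
  define m where "m = real k + 5/2"
  define P where "P = (fact (2*k+1) / fact k :: real)"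
  have m: "m \<ge> 11/2" unfolding m_def using Suc.hyps by simp
  have IH: "2^(2*k+1) * m^(4*k+2) < pi^2 * P^4" using Suc.IH unfolding m_def P_def .
  have A: "(m+1)^(4*k+10) \<le> exp 4 * m^(4*k+10)"
  proof -
    have "(m+1)^(4*k+10) \<le> exp (real (4*k+10) / m) * m^(4*k+10)"
      by (rule pow_exp_bound) (use m in simp)
    also have "real (4*k+10) / m = 4" unfolding m_def by (simp add: field_simps)
    finally show ?thesis .
  qed
  have B: "exp 2 * m^4 \<le> 8 * ((m-1)*(m+1))^2" by (rule B_ineq) (use m in simp)
  have B2: "exp 4 * m^8 \<le> 64 * ((m-1)*(m+1))^4"
  proof -
    have "(exp 2 * m^4)^2 \<le> (8 * ((m-1)*(m+1))^2)^2"
      by (rule power_mono[OF B]) simp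
    moreover have "(exp 2 * m^4)^2 = exp 4 * m^8"
      by (simp add: power_mult_distrib power_mult[symmetric] exp_of_nat_mult[symmetric])
    moreover have "(8 * ((m-1)*(m+1))^2)^2 = 64 * ((m-1)*(m+1))^4"
      by (simp add: power_mult_distrib power_mult[symmetric])
    ultimately show ?thesis by simp
  qed
  have eq0: "4*k+6+4 = 4*k+10" by simp
  have "(2^(2*k+3) * (m+1)^(4*k+6)) * (m+1)^4 = 2^(2*k+3) * (m+1)^(4*k+10)"
    by (simp only: mult.assoc power_add[symmetric] eq0)
  also have "\<dots> \<le> 2^(2*k+3) * (exp 4 * m^(4*k+10))"
    by (rule mult_left_mono[OF A]) simp
  also have "\<dots> = (4 * exp 4 * m^8) * (2^(2*k+1) * m^(4*k+2))"
  proof -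
    have e1: "4*k+10 = 8 + (4*k+2)" and e2: "2*k+3 = 2 + (2*k+1)" by simp_all
    have "m^(4*k+10) = m^8 * m^(4*k+2)" by (simp only: e1 power_add)
    moreover have "(2::real)^(2*k+3) = 4 * 2^(2*k+1)" by (simp only: e2 power_add) simp
    ultimately show ?thesis by (simp add: mult_ac)
  qed
  also have "\<dots> < (4 * exp 4 * m^8) * (pi^2 * P^4)"
    by (rule mult_strict_left_mono[OF IH]) (use m in simp)
  also have "\<dots> \<le> (4 * (64 * ((m-1)*(m+1))^4)) * (pi^2 * P^4)"
    by (rule mult_right_mono) (use B2 in auto)
  also have "\<dots> = (pi^2 * ((4 * (m-1)) * P)^4) * (m+1)^4"
  proof -
    have "((4 * (m-1)) * P)^4 = 4^4 * (m-1)^4 * P^4" by (simp only: power_mult_distrib)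
    then have "((4 * (m-1)) * P)^4 = 256 * (m-1)^4 * P^4" by simp
    moreover have "((m-1)*(m+1))^4 = (m-1)^4 * (m+1)^4" by (simp add: power_mult_distrib)
    ultimately show ?thesis by (simp add: mult_ac)
  qed
  also have "(4 * (m-1)) * P = fact (2*(Suc k)+1) / fact (Suc k)"
    unfolding P_Suc P_def m_def by (simp add: algebra_simps)
  finally have "(2^(2*k+3) * (m+1)^(4*k+6)) * (m+1)^4 < (pi^2 * (fact (2*(Suc k)+1) / fact (Suc k))^4) * (m+1)^4" .
  then have r: "2^(2*k+3) * (m+1)^(4*k+6) < pi^2 * (fact (2*(Suc k)+1) / fact (Suc k))^4"
    by (rule mult_right_less_imp_less) simp
  have mm: "real (Suc k) + 5/2 = m + 1" unfolding m_def by simp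
  have e: "2*(Suc k)+1 = 2*k+3" "4*(Suc k)+2 = 4*k+6" by simp_all
  show ?case unfolding mm e using r[unfolded e] .
qed

lemma even_final:
  fixes k :: nat
  assumes "k \<ge> 1"
  shows "(2*real k^2 + 7*real k + 13/2)^k < 16^k * (fact k)^2"
proof -
  consider "k = 1" | "k = 2" | "k = 3" | "k \<ge> 4" using assms by linarith
  then show ?thesis
  proof cases
    case 4
    have "(2*real k^2 + 7*real k + 13/2)^k \<le> (2*(real k+2)^2)^k"
      by (rule power_mono) (auto simp: power2_eq_square algebra_simps)
    also have "\<dots> = 2^k * (real k + 2)^(2*k)" by (simp add: power_mult_distrib power_mult)
    also have "\<dots> < 16^k * (fact k)^2" by (rule even_T[OF 4])
    finally show ?thesis .
  qed (simp_all add: fact_numeral power2_eq_square power_divide)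
qed

lemma odd_final:
  fixes k :: nat
  assumes "k \<ge> 1"
  shows "(2*real k^2 + 9*real k + 21/2)^(2*k+1) < pi^2 * (fact (2*k+1) / fact k)^4"
proof -
  consider "k = 1" | "k = 2" | "k \<ge> 3" using assms by linarith
  then show ?thesis
  proof cases
    case 3
    have "(2*real k^2 + 9*real k + 21/2)^(2*k+1) \<le> (2*(real k+5/2)^2)^(2*k+1)"
      by (rule power_mono) (auto simp: power2_eq_square algebra_simps)
    also have "\<dots> = 2^(2*k+1) * (real k + 5/2)^(4*k+2)"
    proof -
      have "4*k+2 = 2*(2*k+1)" by simp
      then show ?thesis by (simp only: power_mult_distrib power_mult)
    qed
    also have "\<dots> < pi^2 * (fact (2*k+1) / fact k)^4" by (rule odd_T[OF 3])
    finally show ?thesis .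
  next
    case 1
    have "(2*real k^2 + 9*real k + 21/2)^(2*k+1) < 9 * (fact (2*k+1) / fact k)^4"
      using 1 by (simp add: fact_numeral power_divide)
    also have "\<dots> \<le> pi^2 * (fact (2*k+1) / fact k)^4"
      by (rule mult_right_mono) (use pi_sq_gt_9 in auto)
    finally show ?thesis .
  next
    case 2
    have "(2*real k^2 + 9*real k + 21/2)^(2*k+1) < 9 * (fact (2*k+1) / fact k)^4"
      using 2 by (simp add: fact_numeral power_divide)
    also have "\<dots> \<le> pi^2 * (fact (2*k+1) / fact k)^4"
      by (rule mult_right_mono) (use pi_sq_gt_9 in auto)
    finally show ?thesis .
  qed
qed


lemma half_alg:
  fixes a F s Q K :: real
  assumes "a \<ge> 0" "Q > 0" "K > 0"
  shows "(a + 1/2) * (F * s / (Q * K)) = ((2*a+2) * (2*a+1)) * F * s / ((4*Q) * ((a+1)*K))"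
proof -
  have a1: "a + 1 \<noteq> 0" using assms by simp
  have "((2*a+2) * (2*a+1)) * F * s / ((4*Q) * ((a+1)*K)) = ((a+1) * (2 * (2*a+1) * F * s)) / ((a+1) * (4 * Q * K))"
    by (simp add: algebra_simps)
  also have "\<dots> = (2 * (2*a+1) * F * s) / (4 * Q * K)" using a1 by (rule nonzero_mult_divide_mult_cancel_left)
  also have "\<dots> = (a + 1/2) * (F * s / (Q * K))" using assms by (simp add: field_simps)
  finally show ?thesis by simp
qed

lemma Gamma_half:
  "Gamma (real k + 1/2) = fact (2*k) * sqrt pi / (4^k * fact k)"
proof (induction k)
  case 0
  then show ?case by (simp add: Gamma_one_half_real)
next
  case (Suc k)
  have ni: "real k + 1/2 \<notin> \<int>\<^sub>\<le>\<^sub>0"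
  proof
    assume "real k + 1/2 \<in> \<int>\<^sub>\<le>\<^sub>0"
    then have "real k + 1/2 \<le> 0" by (rule nonpos_Ints_nonpos)
    then show False by simp
  qed
  have "Gamma (real (Suc k) + 1/2) = Gamma ((real k + 1/2) + 1)" by (simp add: add_ac)
  also have "\<dots> = (real k + 1/2) * Gamma (real k + 1/2)" by (rule Gamma_plus1[OF ni])
  also have "\<dots> = (real k + 1/2) * (fact (2*k) * sqrt pi / (4^k * fact k))" using Suc by simp
  also have "\<dots> = fact (2 * Suc k) * sqrt pi / (4 ^ Suc k * fact (Suc k))"
  proof -
    have f: "fact (2 * Suc k) = ((2*real k+2) * (2*real k+1)) * (fact (2*k) :: real)"
    proof -
      have "2 * Suc k = Suc (Suc (2*k))" by simp
      then show ?thesis by (simp only: fact_Suc) (simp add: algebra_simps)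
    qed
    have "fact (Suc k) = (real k + 1) * (fact k :: real)" by simp
    moreover have "(4::real) ^ Suc k = 4 * 4^k" by simp
    ultimately show ?thesis unfolding f
      by (simp only:) (rule half_alg, simp_all)
  qed
  finally show ?case .
qed

lemma Gamma_half3:
  "Gamma (real k + 1/2 + 1) = fact (2*k+1) * sqrt pi / (2 * 4^k * fact k)"
proof -
  have ni: "real k + 1/2 \<notin> \<int>\<^sub>\<le>\<^sub>0"
  proof
    assume "real k + 1/2 \<in> \<int>\<^sub>\<le>\<^sub>0"
    then have "real k + 1/2 \<le> 0" by (rule nonpos_Ints_nonpos)
    then show False by simp
  qed
  have "Gamma (real k + 1/2 + 1) = (real k + 1/2) * Gamma (real k + 1/2)" by (rule Gamma_plus1[OF ni])
  also have "\<dots> = (real k + 1/2) * (fact (2*k) * sqrt pi / (4^k * fact k))" by (simp add: Gamma_half)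
  also have "\<dots> = fact (2*k+1) * sqrt pi / (2 * 4^k * fact k)"
    by (simp add: field_simps)
  finally show ?thesis .
qed

lemma cc_half: "cc (1/2) k = (-1)^k * (2 / sqrt pi) / fact (2*k+1)"
proof -
  define F where "F = (fact (2*k+1) :: real)"
  define K where "K = (fact k :: real)"
  have F: "F > 0" and K: "K > 0" unfolding F_def K_def by simp_all
  have "rGamma (real k + 1/2 + 1) = 2 * 4^k * K / (F * sqrt pi)"
    unfolding rGamma_inverse_Gamma Gamma_half3 F_def[symmetric] K_def[symmetric] by (simp add: field_simps)
  then show ?thesis unfolding cc_def F_def[symmetric] K_def[symmetric] using F K by (simp add: field_simps)
qed

lemma sin_sums_odd: "(\<lambda>k. (-1)^k / fact (2*k+1) * x^(2*k+1)) sums sin (x::real)"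
proof -
  have "(\<lambda>n. sin_coeff n * x^n) sums sin x" using sin_converges[of x] by simp
  from sums_group[OF this, of 2]
  have "(\<lambda>k. \<Sum>i\<in>{k*2..<k*2+2}. sin_coeff i * x^i) sums sin x" by simp
  moreover have "(\<Sum>i\<in>{k*2..<k*2+2}. sin_coeff i * x^i) = (-1)^k / fact (2*k+1) * x^(2*k+1)" for k
  proof -
    have "{k*2..<k*2+2} = {2*k, 2*k+1}" by auto
    then show ?thesis by (simp add: sin_coeff_def)
  qed
  ultimately show ?thesis by simp
qed

lemma GG_half: "x * GG (1/2) (x^2) = (2 / sqrt pi) * sin x"
proof -
  have "(\<lambda>k. (2 / sqrt pi) * ((-1)^k / fact (2*k+1) * x^(2*k+1))) sums ((2 / sqrt pi) * sin x)"
    by (intro sums_mult sin_sums_odd)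
  moreover have "(\<lambda>k. (2 / sqrt pi) * ((-1)^k / fact (2*k+1) * x^(2*k+1))) = (\<lambda>k. x * (cc (1/2) k * (x^2)^k))"
    by (auto simp: fun_eq_iff cc_half power_mult[symmetric] mult_ac)
  ultimately have "(\<lambda>k. x * (cc (1/2) k * (x^2)^k)) sums ((2 / sqrt pi) * sin x)" by simp
  moreover have "(\<lambda>k. x * (cc (1/2) k * (x^2)^k)) sums (x * GG (1/2) (x^2))"
    unfolding GG_def by (intro sums_mult summable_sums cc_summable) simp
  ultimately show ?thesis using sums_unique2 by blast
qed

lemma first_zero_half: "bessel_first_zero (1/2) = pi"
proof -
  have J: "bessel_J (1/2) x = 0 \<longleftrightarrow> sin x = 0" if x: "x > 0" for x
  proof -
    have "bessel_J (1/2) x = (x/2) powr (1/2) * GG (1/2) (x^2)" by (rule bessel_GG) (use x in auto)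
    moreover have "GG (1/2) (x^2) = (2 / sqrt pi) * sin x / x" using GG_half[of x] x
      by (simp add: field_simps)
    ultimately show ?thesis using x by simp
  qed
  let ?S = "{x. 0 < x \<and> bessel_J (1/2) x = 0}"
  have "Inf ?S = pi"
  proof (rule cInf_eq_minimum)
    show "pi \<in> ?S" using J[of pi] by simp
    fix y assume "y \<in> ?S"
    then have y: "y > 0" "sin y = 0" using J by auto
    show "pi \<le> y"
    proof (rule ccontr)
      assume "\<not> pi \<le> y"
      then have "sin y > 0" using y by (intro sin_gt_zero) auto
      then show False using y by simp
    qed
  qed
  then show ?thesis unfolding bessel_first_zero_def .
qed


lemma even_case:
  fixes k :: nat
  assumes k: "k \<ge> 1"
  shows "bessel_first_zero (real (2*k) / 2) ^ (2*k) < 16^k * (fact k)^2"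
proof -
  define c where "c = 2*real k^2 + 7*real k + 13/2"
  have c0: "c > 0"
  proof -
    have "0 \<le> 2*real k^2 + 9*real k" by simp
    moreover have "0 \<le> 2*real k^2 + 7*real k" by simp
    ultimately show ?thesis unfolding c_def by linarith
  qed
  have X: "sqrt c > 0" using c0 by simp
  have XX: "(sqrt c)^2 > (real (2*k)+3)*(real (2*k)+4)/2"
    using c0 unfolding c_def by (simp add: algebra_simps power2_eq_square)
  obtain z where z: "z = bessel_first_zero (real (2*k) / 2)" by simp
  have zb: "0 \<le> z" "z \<le> sqrt c" using first_zero_le[OF X XX] z by auto
  have "z^2 \<le> (sqrt c)^2" by (rule power_mono) (use zb in auto)
  then have z2: "z^2 \<le> c" using c0 by simp
  have "z^(2*k) = (z^2)^k" by (simp add: power_mult)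
  also have "\<dots> \<le> c^k" by (rule power_mono[OF z2]) simp
  also have "\<dots> < 16^k * (fact k)^2" unfolding c_def by (rule even_final[OF k])
  finally show ?thesis using z by simp
qed

lemma odd_case:
  fixes k :: nat
  assumes k: "k \<ge> 1"
  shows "bessel_first_zero (real (2*k+1) / 2) ^ (2*k+1) < pi * (fact (2*k+1))^2 / (fact k)^2"
proof -
  define c where "c = 2*real k^2 + 9*real k + 21/2"
  have c0: "c > 0"
  proof -
    have "0 \<le> 2*real k^2 + 9*real k" by simp
    moreover have "0 \<le> 2*real k^2 + 7*real k" by simp
    ultimately show ?thesis unfolding c_def by linarith
  qed
  have X: "sqrt c > 0" using c0 by simp
  have XX: "(sqrt c)^2 > (real (2*k+1)+3)*(real (2*k+1)+4)/2"
    using c0 unfolding c_def by (simp add: algebra_simps power2_eq_square)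
  obtain z where z: "z = bessel_first_zero (real (2*k+1) / 2)" by simp
  have zb: "0 \<le> z" "z \<le> sqrt c" using first_zero_le[OF X XX] z by auto
  have "z^2 \<le> (sqrt c)^2" by (rule power_mono) (use zb in auto)
  then have z2: "z^2 \<le> c" using c0 by simp
  define R where "R = pi * (fact (2*k+1))^2 / (fact k)^2"
  have R0: "R \<ge> 0" unfolding R_def by simp
  have "(z^(2*k+1))^2 = (z^2)^(2*k+1)" by (simp only: power_mult[symmetric] mult.commute)
  also have "\<dots> \<le> c^(2*k+1)" by (rule power_mono[OF z2]) simp
  also have "\<dots> < pi^2 * (fact (2*k+1) / fact k)^4" unfolding c_def by (rule odd_final[OF k])
  also have "\<dots> = R^2" unfolding R_def by (simp add: power_divide power_mult_distrib power_mult[symmetric])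
  finally have "(z^(2*k+1))^2 < R^2" .
  then have "z^(2*k+1) < R" using R0 by (rule power_less_imp_less_base)
  then show ?thesis using z R_def by simp
qed

lemma Gamma_nat1: "Gamma (real k + 1) = fact k"
  using Gamma_fact[of k, where 'a=real] by (simp add: add.commute)

theorem proposition5p1:
  fixes \<delta> m :: nat
  assumes "\<delta> \<in> {1, 2, 4}" and "m \<ge> 2"
  defines "\<alpha> \<equiv> (real \<delta> * (real m - 1) - 2) / 2"
      and "\<beta> \<equiv> (real \<delta> - 2) / 2"
  shows "(m = 2 \<and> \<delta> = 1 \<longrightarrow>
            bessel_first_zero (\<alpha> + 1) ^ (\<delta> * (m - 1))
              = Gamma (\<alpha> + 2) * Gamma (\<beta> + 1) / Gamma (\<alpha> + \<beta> + 2) * lambdaK \<delta> m)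
       \<and> (\<not> (m = 2 \<and> \<delta> = 1) \<longrightarrow>
            bessel_first_zero (\<alpha> + 1) ^ (\<delta> * (m - 1))
              < Gamma (\<alpha> + 2) * Gamma (\<beta> + 1) / Gamma (\<alpha> + \<beta> + 2) * lambdaK \<delta> m)"
proof -
  have sp: "sqrt pi * sqrt pi = pi" by simp
  consider "\<delta> = 1" "m = 2" | "\<delta> = 1" "m \<noteq> 2" | "\<delta> = 2" | "\<delta> = 4" using assms(1) by auto
  then show ?thesis
  proof cases
    case 1
    have a: "\<alpha> + 1 = 1/2" "\<alpha> + 2 = real 0 + 1/2 + 1" "\<beta> + 1 = 1/2" "\<alpha> + \<beta> + 2 = 1"
      unfolding \<alpha>_def \<beta>_def using 1 by simp_all
    have "Gamma (\<alpha> + 2) * Gamma (\<beta> + 1) / Gamma (\<alpha> + \<beta> + 2) * lambdaK \<delta> m = pi"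
      unfolding a Gamma_half3 using 1 by (simp add: lambdaK_def Gamma_one_half_real)
    moreover have "bessel_first_zero (\<alpha> + 1) ^ (\<delta> * (m - 1)) = pi"
      unfolding a using 1 by (simp add: first_zero_half)
    ultimately show ?thesis using 1 by simp
  next
    case 2
    then have m3: "m \<ge> 3" using assms(2) by simp
    consider k where "m = 2*k+1" "k \<ge> 1" | k where "m = 2*k+2" "k \<ge> 1"
    proof (cases "even m")
      case True
      then obtain j where "m = 2*j" by (auto elim: evenE)
      then show ?thesis using that(2)[of "j - 1"] m3 by auto
    next
      case False
      then obtain j where "m = 2*j+1" by (auto elim: oddE)
      then show ?thesis using that(1)[of j] m3 by auto
    qed
    then show ?thesis
    proof cases
      case (1 k)
      have a: "\<alpha> + 1 = real (2*k) / 2" "\<alpha> + 2 = real k + 1" "\<beta> + 1 = 1/2" "\<alpha> + \<beta> + 2 = real k + 1/2"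
        "\<delta> * (m - 1) = 2*k"
        unfolding \<alpha>_def \<beta>_def using 1 2 by (simp_all add: field_simps)
      have "Gamma (\<alpha> + 2) * Gamma (\<beta> + 1) / Gamma (\<alpha> + \<beta> + 2) * lambdaK \<delta> m
          = fact k * sqrt pi / (fact (2*k) * sqrt pi / (4^k * fact k)) * (2^(2*k) * fact (2*k))"
        unfolding a Gamma_nat1 Gamma_half using 1 2 by (simp add: lambdaK_def Gamma_one_half_real)
      also have "\<dots> = 16^k * (fact k)^2"
      proof -
        have "(2::real)^k * (2^k * 4^k) = 16^k" by (simp flip: power_mult_distrib)
        then show ?thesis by (simp add: field_simps power_mult power2_eq_square)
      qed
      finally have R: "Gamma (\<alpha> + 2) * Gamma (\<beta> + 1) / Gamma (\<alpha> + \<beta> + 2) * lambdaK \<delta> m = 16^k * (fact k)^2" .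
      show ?thesis unfolding R unfolding a(1) a(5) using even_case[OF 1(2)] 2 by simp
    next
      case (2 k)
      have a: "\<alpha> + 1 = real (2*k+1) / 2" "\<alpha> + 2 = real k + 1/2 + 1" "\<beta> + 1 = 1/2" "\<alpha> + \<beta> + 2 = real k + 1"
        "\<delta> * (m - 1) = 2*k+1"
        unfolding \<alpha>_def \<beta>_def using 2 \<open>\<delta> = 1\<close> by (simp_all add: field_simps)
      have "Gamma (\<alpha> + 2) * Gamma (\<beta> + 1) / Gamma (\<alpha> + \<beta> + 2) * lambdaK \<delta> m
          = fact (2*k+1) * sqrt pi / (2 * 4^k * fact k) * sqrt pi / fact k * (2^(2*k+1) * fact (2*k+1))"
        unfolding a Gamma_nat1 Gamma_half3 using 2 \<open>\<delta> = 1\<close> by (simp add: lambdaK_def Gamma_one_half_real)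
      also have "\<dots> = pi * (fact (2*k+1))^2 / (fact k)^2"
      proof -
        have e: "(2::real)^(2*k+1) = 2 * 4^k" by (simp add: power_mult)
        define F where "F = (fact (2*k+1) :: real)"
        define K where "K = (fact k :: real)"
        define Q where "Q = (4^k :: real)"
        have K: "K > 0" and Q: "Q > 0" unfolding K_def Q_def by simp_all
        have "F * sqrt pi / (2 * Q * K) * sqrt pi / K * (2 * Q * F) = (sqrt pi * sqrt pi) * F^2 / K^2"
          using K Q by (simp add: field_simps power2_eq_square)
        then show ?thesis unfolding e F_def[symmetric] K_def[symmetric] Q_def[symmetric] sp .
      qed
      finally have R: "Gamma (\<alpha> + 2) * Gamma (\<beta> + 1) / Gamma (\<alpha> + \<beta> + 2) * lambdaK \<delta> m
          = pi * (fact (2*k+1))^2 / (fact k)^2" .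
      show ?thesis unfolding R unfolding a(1) a(5) using odd_case[OF 2(2)] \<open>m \<noteq> 2\<close> by simp
    qed
  next
    case 3
    define k where "k = m - 1"
    have k: "k \<ge> 1" "m = k + 1" unfolding k_def using assms(2) by simp_all
    have a: "\<alpha> + 1 = real (2*k) / 2" "\<alpha> + 2 = real k + 1" "\<beta> + 1 = 1" "\<alpha> + \<beta> + 2 = real k + 1"
      "\<delta> * (m - 1) = 2*k"
      unfolding \<alpha>_def \<beta>_def using k 3 by (simp_all add: field_simps)
    have R: "Gamma (\<alpha> + 2) * Gamma (\<beta> + 1) / Gamma (\<alpha> + \<beta> + 2) * lambdaK \<delta> m = 16^k * (fact k)^2"
      unfolding a Gamma_nat1 using k 3 by (simp add: lambdaK_def power_mult)
    show ?thesis unfolding R unfolding a(1) a(5) using even_case[OF k(1)] 3 by simp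
  next
    case 4
    define j where "j = m - 1"
    define k where "k = 2 * j"
    have k: "k \<ge> 1" "m = j + 1" unfolding k_def j_def using assms(2) by simp_all
    have a: "\<alpha> + 1 = real (2*k) / 2" "\<alpha> + 2 = real k + 1" "\<beta> + 1 = 2" "\<alpha> + \<beta> + 2 = real (k+1) + 1"
      "\<delta> * (m - 1) = 2*k"
      unfolding \<alpha>_def \<beta>_def using k 4 unfolding k_def by (simp_all add: field_simps)
    have l: "lambdaK \<delta> m = 16^k * fact (k+1) * fact k"
    proof -
      have "2*m - 1 = k+1" "2*m-2 = k" using k unfolding k_def by simp_all
      moreover have "(2::real)^(8*(m-1)) = 16^k" unfolding k_def j_def
        by (simp add: power_mult)
      ultimately show ?thesis using 4 by (simp add: lambdaK_def)
    qed
    have g2: "Gamma (2::real) = 1" using Gamma_nat1[of 1] by simp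
    have R: "Gamma (\<alpha> + 2) * Gamma (\<beta> + 1) / Gamma (\<alpha> + \<beta> + 2) * lambdaK \<delta> m = 16^k * (fact k)^2"
      unfolding a Gamma_nat1 l g2 by (simp add: power2_eq_square del: fact_Suc)
    show ?thesis unfolding R unfolding a(1) a(5) using even_case[OF k(1)] 4 by simp
  qed
qed

end
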